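(* Let $G$ be a finite simple undirected graph with $g(G)>\chi(G)$, where $g(G)$ is the girth of $G$ and $\chi(G)$ is the chromatic number of $G$, and let $\beta$ be any proper colouring of $G$. Then $G$ contains an induced path on $\chi(G)$ vertices whose vertices receive pairwise distinct colours under $\beta$.
   Context: A proper colouring $\beta$ of $G$ is a map from $V(G)$ to a set of colours such that $\beta(u)\neq\beta(v)$ for every edge $uv\in E(G)$; it need not use only $\chi(G)$ colours. The girth $g(G)$ is the length of a shortest cycle in $G$ (taken to be $\infty$ if $G$ has no cycle). A path is induced if no two non-consecutive vertices of the path are adjacent in $G$. *)

theory Defs
  imports Main "HOL-Library.Extended_Nat"
begin

definition simple_graph :: "'a set \<Rightarrow> ('a \<Rightarrow> 'a \<Rightarrow> bool) \<Rightarrow> bool" where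
  "simple_graph V E \<longleftrightarrow> finite V \<and> (\<forall>u v. E u v \<longrightarrow> E v u) \<and> (\<forall>v. \<not> E v v)
     \<and> (\<forall>u v. E u v \<longrightarrow> u \<in> V \<and> v \<in> V)"

definition proper_colouring :: "'a set \<Rightarrow> ('a \<Rightarrow> 'a \<Rightarrow> bool) \<Rightarrow> ('a \<Rightarrow> 'c) \<Rightarrow> bool" where
  "proper_colouring V E \<beta> \<longleftrightarrow> (\<forall>u\<in>V. \<forall>v\<in>V. E u v \<longrightarrow> \<beta> u \<noteq> \<beta> v)"

definition chromatic_number :: "'a set \<Rightarrow> ('a \<Rightarrow> 'a \<Rightarrow> bool) \<Rightarrow> nat" where
  "chromatic_number V E = (LEAST k. \<exists>f :: 'a \<Rightarrow> nat. f ` V \<subseteq> {..<k} \<and> proper_colouring V E f)"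

definition is_cycle :: "'a set \<Rightarrow> ('a \<Rightarrow> 'a \<Rightarrow> bool) \<Rightarrow> 'a list \<Rightarrow> bool" where
  "is_cycle V E c \<longleftrightarrow> length c \<ge> 3 \<and> distinct c \<and> set c \<subseteq> V
     \<and> (\<forall>i. Suc i < length c \<longrightarrow> E (c ! i) (c ! Suc i)) \<and> E (last c) (hd c)"

text \<open>Girth: length of a shortest cycle, \<infinity> if there is none (Inf {} = \<infinity> on enat).\<close>
definition girth :: "'a set \<Rightarrow> ('a \<Rightarrow> 'a \<Rightarrow> bool) \<Rightarrow> enat" where
  "girth V E = Inf {enat (length c) | c. is_cycle V E c}"

definition is_induced_path :: "'a set \<Rightarrow> ('a \<Rightarrow> 'a \<Rightarrow> bool) \<Rightarrow> 'a list \<Rightarrow> bool" where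
  "is_induced_path V E p \<longleftrightarrow> distinct p \<and> set p \<subseteq> V
     \<and> (\<forall>i j. i < length p \<and> j < length p \<longrightarrow> (E (p ! i) (p ! j) \<longleftrightarrow> (i = Suc j \<or> j = Suc i)))"

end

theory Submission
  imports Defs
begin

definition incpath :: "'a set \<Rightarrow> ('a \<Rightarrow> 'a \<Rightarrow> bool) \<Rightarrow> ('a \<Rightarrow> nat) \<Rightarrow> 'a list \<Rightarrow> bool" where
  "incpath V E c xs \<longleftrightarrow> set xs \<subseteq> V \<and> (\<forall>i. Suc i < length xs \<longrightarrow> E (xs!i) (xs!Suc i))
     \<and> sorted_wrt (<) (map c xs)"

lemma incpath_distinct: "incpath V E c xs \<Longrightarrow> distinct xs"
  unfolding incpath_def using strict_sorted_iff distinct_map by blast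

lemma incpath_len: "finite V \<Longrightarrow> incpath V E c xs \<Longrightarrow> length xs \<le> card V"
  using incpath_distinct[of V E c xs] unfolding incpath_def
  by (metis card_mono distinct_card)

lemma incpath_take: "incpath V E c xs \<Longrightarrow> incpath V E c (take n xs)"
  unfolding incpath_def
  by (auto simp: take_map[symmetric] dest: in_set_takeD)

lemma incpath_snoc:
  assumes "incpath V E c xs" "xs \<noteq> []" "E (last xs) v" "c (last xs) < c v" "v \<in> V"
  shows "incpath V E c (xs @ [v])"
proof -
  have s: "sorted_wrt (<) (map c xs)" using assms(1) incpath_def by blast
  have "\<forall>x\<in>set xs. c x < c v"
  proof
    fix x assume "x \<in> set xs"
    then obtain i where i: "i < length xs" "xs ! i = x" by (auto simp: in_set_conv_nth)
    have "c x \<le> c (last xs)"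
    proof (cases "i = length xs - 1")
      case True thus ?thesis using i assms(2) by (simp add: last_conv_nth)
    next
      case False
      hence "i < length xs - 1" using i by simp
      with s have "map c xs ! i < map c xs ! (length xs - 1)"
        using sorted_wrt_iff_nth_less by (metis diff_less i(1) length_map less_nat_zero_code
          nat_neq_iff zero_less_one)
      thus ?thesis using i assms(2) by (simp add: last_conv_nth)
    qed
    thus "c x < c v" using assms(4) by simp
  qed
  hence s2: "sorted_wrt (<) (map c (xs @ [v]))" using s by (auto simp: sorted_wrt_append)
  have a: "\<forall>i. Suc i < length (xs@[v]) \<longrightarrow> E ((xs@[v])!i) ((xs@[v])!Suc i)"
  proof (intro allI impI)
    fix i assume "Suc i < length (xs@[v])"
    hence "Suc i < length xs \<or> Suc i = length xs" by auto
    thus "E ((xs@[v])!i) ((xs@[v])!Suc i)"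
    proof
      assume "Suc i < length xs" thus ?thesis using assms(1) unfolding incpath_def
        by (simp add: nth_append)
    next
      assume h: "Suc i = length xs"
      hence "xs ! i = last xs" using assms(2) by (simp add: last_conv_nth flip: h)
      thus ?thesis using h assms(3) by (simp add: nth_append)
    qed
  qed
  show ?thesis using s2 a assms(1,5) unfolding incpath_def by auto
qed

theorem corollary1:
  fixes V :: "'a set" and E :: "'a \<Rightarrow> 'a \<Rightarrow> bool" and \<beta> :: "'a \<Rightarrow> 'c"
  assumes "simple_graph V E"
    and "girth V E > enat (chromatic_number V E)"
    and "proper_colouring V E \<beta>"
  shows "\<exists>p. is_induced_path V E p \<and> length p = chromatic_number V E \<and> distinct (map \<beta> p)"
proof -
  have fin: "finite V" and sym: "\<And>u v. E u v \<Longrightarrow> E v u" and irr: "\<And>v. \<not> E v v"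
    and inV: "\<And>u v. E u v \<Longrightarrow> u \<in> V \<and> v \<in> V"
    using assms(1) unfolding simple_graph_def by auto
  obtain r :: "'c \<Rightarrow> nat" where r: "inj_on r (\<beta> ` V)"
    using finite_imp_inj_to_nat_seg[of "\<beta> ` V"] fin by blast
  define c where "c = r \<circ> \<beta>"
  have cprop: "\<And>u v. E u v \<Longrightarrow> c u \<noteq> c v"
  proof -
    fix u v assume e: "E u v"
    hence "\<beta> u \<noteq> \<beta> v" using assms(3) inV unfolding proper_colouring_def by blast
    thus "c u \<noteq> c v" using r inV[OF e] unfolding c_def by (auto dest: inj_onD)
  qed
  define L where "L = (\<lambda>v. {length xs |xs. incpath V E c xs \<and> xs \<noteq> [] \<and> last xs = v})"
  define g where "g = (\<lambda>v. Max (L v))"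
  have Lfin: "finite (L v)" for v
    by (rule finite_subset[of _ "{..card V}"]) (auto simp: L_def intro: incpath_len[OF fin])
  have Lne: "v \<in> V \<Longrightarrow> 1 \<in> L v" for v
    unfolding L_def incpath_def by (rule CollectI, rule exI[of _ "[v]"]) auto
  have gge: "v \<in> V \<Longrightarrow> g v \<ge> 1" for v
    using Lne Lfin g_def by (simp add: Max_ge)
  have gach: "v \<in> V \<Longrightarrow> \<exists>xs. incpath V E c xs \<and> xs \<noteq> [] \<and> last xs = v \<and> length xs = g v" for v
  proof -
    assume "v \<in> V"
    hence "g v \<in> L v" using Lne Lfin g_def by (metis Max_in empty_iff)
    thus ?thesis unfolding L_def by (smt (verit) mem_Collect_eq)
  qed
  have gmono: "E u v \<Longrightarrow> c u < c v \<Longrightarrow> g u < g v" for u v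
  proof -
    assume e: "E u v" and lt: "c u < c v"
    obtain xs where xs: "incpath V E c xs" "xs \<noteq> []" "last xs = u" "length xs = g u"
      using gach inV[OF e] by blast
    have "incpath V E c (xs @ [v])" using incpath_snoc[OF xs(1,2)] xs(3) e lt inV[OF e] by simp
    hence "length (xs @ [v]) \<in> L v" unfolding L_def
      by (intro CollectI exI[of _ "xs @ [v]"]) simp
    hence "length (xs @ [v]) \<le> g v" using Lfin g_def by simp
    thus ?thesis using xs(4) by simp
  qed
  have gprop: "E u v \<Longrightarrow> g u \<noteq> g v" for u v
    using cprop[of u v] gmono[of u v] gmono[of v u] sym[of u v] by fastforce
  define \<chi> where "\<chi> = chromatic_number V E"
  show ?thesis
  proof (cases "V = {}")
    case True
    have "\<chi> = 0" unfolding \<chi>_def chromatic_number_def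
      by (rule Least_eq_0) (auto simp: True proper_colouring_def)
    thus ?thesis unfolding \<chi>_def[symmetric]
      by (intro exI[of _ "[]"]) (simp add: is_induced_path_def)
  next
    case False
    define M where "M = Max (g ` V)"
    have gM: "v \<in> V \<Longrightarrow> g v \<le> M" for v using fin M_def by simp
    have "\<chi> \<le> M" unfolding \<chi>_def chromatic_number_def
    proof (rule Least_le, rule exI[of _ "\<lambda>v. g v - 1"], intro conjI)
      show "(\<lambda>v. g v - 1) ` V \<subseteq> {..<M}" using gM gge by force
      show "proper_colouring V E (\<lambda>v. g v - 1)" unfolding proper_colouring_def
        using gprop gge by (metis One_nat_def Suc_pred' less_eq_Suc_le)
    qed
    obtain w where w: "w \<in> V" "g w = M" using False fin M_def
      by (metis Max_in finite_imageI image_iff image_is_empty)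
    obtain xs where xs: "incpath V E c xs" "length xs = M" using gach[OF w(1)] w(2) by blast
    define p where "p = take \<chi> xs"
    have pi: "incpath V E c p" using incpath_take xs(1) p_def by blast
    have lp: "length p = \<chi>" using xs(2) \<open>\<chi> \<le> M\<close> p_def by simp
    have dp: "distinct p" using incpath_distinct[OF pi] .
    have sp: "set p \<subseteq> V" and ap: "\<And>i. Suc i < length p \<Longrightarrow> E (p!i) (p!Suc i)"
      and so: "sorted_wrt (<) (map c p)" using pi unfolding incpath_def by auto
    have db: "distinct (map \<beta> p)"
    proof -
      have "distinct (map r (map \<beta> p))" using so strict_sorted_iff c_def by (metis map_map)
      thus ?thesis using distinct_map by blast
    qed
    have ind: "E (p!i) (p!j) \<longleftrightarrow> (i = Suc j \<or> j = Suc i)" if ij: "i < length p" "j < length p" for i j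
    proof
      assume "i = Suc j \<or> j = Suc i"
      thus "E (p!i) (p!j)" using ap sym ij by blast
    next
      have nocyc: False if lt: "i + 2 \<le> j" "j < length p" "E (p!i) (p!j)" for i j
      proof -
        define cy where "cy = drop i (take (Suc j) p)"
        have lc: "length cy = Suc j - i" using lt cy_def by simp
        have cyn: "k < length cy \<Longrightarrow> cy ! k = p ! (i + k)" for k
          using lt cy_def by simp
        have "is_cycle V E cy" unfolding is_cycle_def
        proof (intro conjI allI impI)
          show "3 \<le> length cy" using lc lt by simp
          show "distinct cy" using dp cy_def by simp
          show "set cy \<subseteq> V" using sp cy_def by (meson in_set_dropD in_set_takeD subset_iff)
          fix k assume "Suc k < length cy"
          thus "E (cy ! k) (cy ! Suc k)" using cyn ap lc lt by simp
        next
          have "cy \<noteq> []" using lc lt by (metis length_0_conv zero_less_diff less_Suc_eq le_add1 order.strict_trans1 less_irrefl add_leD1)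
          hence "last cy = p ! j" "hd cy = p ! i"
            using cyn lc lt by (auto simp: last_conv_nth hd_conv_nth)
          thus "E (last cy) (hd cy)" using sym lt by simp
        qed
        hence "girth V E \<le> enat (length cy)" unfolding girth_def by (blast intro: Inf_lower)
        moreover have "length cy \<le> \<chi>" using lc lt lp by simp
        ultimately show False using assms(2) \<chi>_def by (metis enat_ord_simps(1) leD order_trans)
      qed
      assume e: "E (p!i) (p!j)"
      have "i \<noteq> j" using e irr by auto
      show "i = Suc j \<or> j = Suc i"
      proof (rule ccontr)
        assume "\<not> (i = Suc j \<or> j = Suc i)"
        with \<open>i \<noteq> j\<close> have "i + 2 \<le> j \<or> j + 2 \<le> i" by linarith
        thus False using nocyc[of i j] nocyc[of j i] e sym ij by blast
      qed
    qed
    show ?thesis unfolding \<chi>_def[symmetric]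
      by (rule exI[of _ p]) (simp add: is_induced_path_def dp sp lp db ind)
  qed
qed

end
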